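(* Let $\mathcal E=\widetilde{\Omega^1_D}(\mathcal A)$ be the bimodule of one-forms of a spectral triple $(\mathcal A,\mathcal H,D)$ and suppose Assumption III$'$ holds with data $\mathcal A'\subseteq\mathcal Z(\mathcal A)$, $\mathcal E'\subseteq\mathcal Z(\mathcal E)$. Then $\mathcal Z(\mathcal E)\cong\mathcal E'\otimes_{\mathcal A'}\mathcal Z(\mathcal A)$.
   Context: $\mathcal E$ is the span in $B(\mathcal H)$ of $a[D,b]$, $a,b\in\mathcal A$; $\mathcal Z(\mathcal E)=\{e:ea=ae\ \forall a\}$; $\mathcal Z(\mathcal A)$ the center. Assumption III$'$: there exist a unital $*$-subalgebra $\mathcal A'$ of $\mathcal Z(\mathcal A)$ and an $\mathcal A'$-submodule $\mathcal E'$ of $\mathcal Z(\mathcal E)$ such that $\mathcal E'$ is finitely generated projective over $\mathcal A'$ and the map $\mathcal E'\otimes_{\mathcal A'}\mathcal A\to\mathcal E$, $\sum_ie_i\otimes a_i\mapsto\sum_ie_ia_i$, is an isomorphism of vector spaces. *)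

theory Defs
  imports Complex_Main
begin

text \<open>Ambient algebra: a unital complex *-algebra (playing the role of B(H)),
  given by a ring type with a complex scalar multiplication and an involution.\<close>

definition complex_star_algebra ::
  "(complex \<Rightarrow> 'b::ring_1 \<Rightarrow> 'b) \<Rightarrow> ('b \<Rightarrow> 'b) \<Rightarrow> bool" where
  "complex_star_algebra sc st \<longleftrightarrow>
     (\<forall>c x y. sc c (x + y) = sc c x + sc c y) \<and>
     (\<forall>c d x. sc (c + d) x = sc c x + sc d x) \<and>
     (\<forall>c d x. sc c (sc d x) = sc (c * d) x) \<and>
     (\<forall>x. sc 1 x = x) \<and>
     (\<forall>c x y. sc c (x * y) = sc c x * y \<and> sc c (x * y) = x * sc c y) \<and>
     (\<forall>x y. st (x + y) = st x + st y) \<and>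
     (\<forall>c x. st (sc c x) = sc (cnj c) (st x)) \<and>
     (\<forall>x y. st (x * y) = st y * st x) \<and>
     (\<forall>x. st (st x) = x)"

definition unital_star_subalgebra ::
  "(complex \<Rightarrow> 'b::ring_1 \<Rightarrow> 'b) \<Rightarrow> ('b \<Rightarrow> 'b) \<Rightarrow> 'b set \<Rightarrow> bool" where
  "unital_star_subalgebra sc st S \<longleftrightarrow>
     1 \<in> S \<and> 0 \<in> S \<and>
     (\<forall>x\<in>S. \<forall>y\<in>S. x + y \<in> S \<and> x * y \<in> S) \<and>
     (\<forall>c. \<forall>x\<in>S. sc c x \<in> S) \<and>
     (\<forall>x\<in>S. st x \<in> S)"

definition cspan :: "(complex \<Rightarrow> 'b::ring_1 \<Rightarrow> 'b) \<Rightarrow> 'b set \<Rightarrow> 'b set" where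
  "cspan sc S = {x. \<exists>F c. finite F \<and> F \<subseteq> S \<and> x = (\<Sum>s\<in>F. sc (c s) s)}"

definition centre_in :: "'b::ring_1 set \<Rightarrow> 'b set \<Rightarrow> 'b set" where
  "centre_in A X = {x \<in> X. \<forall>a\<in>A. x * a = a * x}"

definition submodule_over :: "'b::ring_1 set \<Rightarrow> 'b set \<Rightarrow> bool" where
  "submodule_over R M \<longleftrightarrow>
     0 \<in> M \<and> (\<forall>x\<in>M. \<forall>y\<in>M. x + y \<in> M) \<and> (\<forall>x\<in>M. \<forall>r\<in>R. x * r \<in> M)"

text \<open>M is a finitely generated projective R-module (R commutative): M is a direct
  summand (retract, via R-linear maps) of the free module R^n for some n.\<close>
definition free_rank :: "'b::ring_1 set \<Rightarrow> nat \<Rightarrow> (nat \<Rightarrow> 'b) set" where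
  "free_rank R n = {v. (\<forall>k<n. v k \<in> R) \<and> (\<forall>k\<ge>n. v k = 0)}"

definition fg_projective :: "'b::ring_1 set \<Rightarrow> 'b set \<Rightarrow> bool" where
  "fg_projective R M \<longleftrightarrow>
     (\<exists>n i p.
        (\<forall>m\<in>M. i m \<in> free_rank R n) \<and>
        (\<forall>m\<in>M. \<forall>m'\<in>M. i (m + m') = (\<lambda>k. i m k + i m' k)) \<and>
        (\<forall>m\<in>M. \<forall>r\<in>R. i (m * r) = (\<lambda>k. i m k * r)) \<and>
        (\<forall>v\<in>free_rank R n. p v \<in> M) \<and>
        (\<forall>v\<in>free_rank R n. \<forall>w\<in>free_rank R n. p (\<lambda>k. v k + w k) = p v + p w) \<and>
        (\<forall>v\<in>free_rank R n. \<forall>r\<in>R. p (\<lambda>k. v k * r) = p v * r) \<and>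
        (\<forall>m\<in>M. p (i m) = m))"

text \<open>Tensor product M \<otimes>_R N, constructed as the free abelian group on M \<times> N
  modulo the R-balanced bilinearity relations.\<close>
definition free_ab :: "'b set \<Rightarrow> 'b set \<Rightarrow> ('b \<times> 'b \<Rightarrow> int) set" where
  "free_ab M N = {f. finite {x. f x \<noteq> 0} \<and> {x. f x \<noteq> 0} \<subseteq> M \<times> N}"

definition pt :: "'b \<times> 'b \<Rightarrow> 'b \<times> 'b \<Rightarrow> int" where
  "pt p = (\<lambda>x. if x = p then 1 else 0)"

inductive_set tensor_rel :: "'b::ring_1 set \<Rightarrow> 'b set \<Rightarrow> 'b set \<Rightarrow> ('b \<times> 'b \<Rightarrow> int) set"
  for M R N where
  zero: "(\<lambda>_. 0) \<in> tensor_rel M R N"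
| addl: "m \<in> M \<Longrightarrow> m' \<in> M \<Longrightarrow> n \<in> N \<Longrightarrow>
          (\<lambda>x. pt (m + m', n) x - pt (m, n) x - pt (m', n) x) \<in> tensor_rel M R N"
| addr: "m \<in> M \<Longrightarrow> n \<in> N \<Longrightarrow> n' \<in> N \<Longrightarrow>
          (\<lambda>x. pt (m, n + n') x - pt (m, n) x - pt (m, n') x) \<in> tensor_rel M R N"
| bal: "m \<in> M \<Longrightarrow> r \<in> R \<Longrightarrow> n \<in> N \<Longrightarrow>
          (\<lambda>x. pt (m * r, n) x - pt (m, r * n) x) \<in> tensor_rel M R N"
| add: "f \<in> tensor_rel M R N \<Longrightarrow> g \<in> tensor_rel M R N \<Longrightarrow>
          (\<lambda>x. f x + g x) \<in> tensor_rel M R N"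
| neg: "f \<in> tensor_rel M R N \<Longrightarrow> (\<lambda>x. - f x) \<in> tensor_rel M R N"

text \<open>Image of a formal sum  \<Sum> k_i (m_i \<otimes> n_i)  under  m \<otimes> n \<mapsto> m n.\<close>
definition tensor_eval :: "('b::ring_1 \<times> 'b \<Rightarrow> int) \<Rightarrow> 'b" where
  "tensor_eval f = (\<Sum>x\<in>{x. f x \<noteq> 0}. of_int (f x) * (fst x * snd x))"

text \<open>The multiplication map M \<otimes>_R N \<rightarrow> T, \<Sum> m_i \<otimes> n_i \<mapsto> \<Sum> m_i n_i, is well defined
  into T and is bijective (surjective, and its kernel is exactly the relations).\<close>
definition tensor_mult_iso :: "'b::ring_1 set \<Rightarrow> 'b set \<Rightarrow> 'b set \<Rightarrow> 'b set \<Rightarrow> bool" where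
  "tensor_mult_iso M R N T \<longleftrightarrow>
     (\<forall>f\<in>free_ab M N. tensor_eval f \<in> T) \<and>
     (\<forall>t\<in>T. \<exists>f\<in>free_ab M N. tensor_eval f = t) \<and>
     (\<forall>f\<in>free_ab M N. tensor_eval f = 0 \<longrightarrow> f \<in> tensor_rel M R N)"

end

theory Submission
  imports Defs
begin


definition Lf :: "('b::ring_1 \<times> 'b \<Rightarrow> 'b) \<Rightarrow> ('b \<times> 'b \<Rightarrow> int) \<Rightarrow> 'b" where
  "Lf \<phi> f = (\<Sum>x\<in>{x. f x \<noteq> 0}. of_int (f x) * \<phi> x)"

lemma eval_Lf: "tensor_eval f = Lf (\<lambda>x. fst x * snd x) f"
  by (simp add: tensor_eval_def Lf_def)

lemma Lf_super: "finite T \<Longrightarrow> {x. f x \<noteq> 0} \<subseteq> T \<Longrightarrow> Lf \<phi> f = (\<Sum>x\<in>T. of_int (f x) * \<phi> x)"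
  unfolding Lf_def by (rule sum.mono_neutral_left) auto

lemma Lf_add:
  assumes "finite {x. f x \<noteq> 0}" "finite {x. g x \<noteq> 0}"
  shows "Lf \<phi> (\<lambda>x. f x + g x) = Lf \<phi> f + Lf \<phi> g"
proof -
  let ?T = "{x. f x \<noteq> 0} \<union> {x. g x \<noteq> 0}"
  have "Lf \<phi> (\<lambda>x. f x + g x) = (\<Sum>x\<in>?T. of_int (f x + g x) * \<phi> x)"
    by (rule Lf_super) (use assms in auto)
  also have "\<dots> = (\<Sum>x\<in>?T. of_int (f x) * \<phi> x) + (\<Sum>x\<in>?T. of_int (g x) * \<phi> x)"
    by (simp add: distrib_right sum.distrib)
  also have "\<dots> = Lf \<phi> f + Lf \<phi> g"
    using assms by (simp add: Lf_super[of ?T f] Lf_super[of ?T g])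
  finally show ?thesis .
qed

lemma Lf_neg: "Lf \<phi> (\<lambda>x. - f x) = - Lf \<phi> f"
  unfolding Lf_def by (simp add: sum_negf)

lemma Lf_diff:
  assumes "finite {x. f x \<noteq> 0}" "finite {x. g x \<noteq> 0}"
  shows "Lf \<phi> (\<lambda>x. f x - g x) = Lf \<phi> f - Lf \<phi> g"
proof -
  have "(\<lambda>x. f x - g x) = (\<lambda>x. f x + (\<lambda>x. - g x) x)" by auto
  moreover have "finite {x. (\<lambda>x. - g x) x \<noteq> 0}" using assms by simp
  ultimately show ?thesis using assms Lf_add[of f "\<lambda>x. - g x" \<phi>] Lf_neg[of \<phi> g] by simp
qed

lemma Lf_pt: "Lf \<phi> (pt p) = \<phi> p"
proof -
  have "{x. pt p x \<noteq> 0} = {p}" by (auto simp: pt_def)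
  thus ?thesis by (simp add: Lf_def pt_def)
qed

lemma supp_pt: "{x. pt p x \<noteq> 0} = {p}" by (auto simp: pt_def)

lemma supp_pt2: "{x. pt p x - pt q x \<noteq> 0} \<subseteq> {p, q}" by (auto simp: pt_def)
lemma supp_pt3: "{x. pt p x - pt q x - pt r x \<noteq> 0} \<subseteq> {p, q, r}" by (auto simp: pt_def)

lemma Lf_pt2: "Lf \<phi> (\<lambda>x. pt p x - pt q x) = \<phi> p - \<phi> q"
  by (subst Lf_diff) (auto simp: supp_pt Lf_pt)

lemma Lf_pt3: "Lf \<phi> (\<lambda>x. pt p x - pt q x - pt r x) = \<phi> p - \<phi> q - \<phi> r"
proof -
  have f: "finite {x. pt p x - pt q x \<noteq> 0}" using supp_pt2 finite_subset by blast
  show ?thesis using Lf_diff[OF f, of "pt r" \<phi>] by (simp add: supp_pt Lf_pt2 Lf_pt)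
qed

lemma supp_lincomb: "{y. (\<Sum>i\<in>I. c i * g i y) \<noteq> (0::int)} \<subseteq> (\<Union>i\<in>I. {y. g i y \<noteq> 0})"
proof
  fix y assume "y \<in> {y. (\<Sum>i\<in>I. c i * g i y) \<noteq> 0}"
  then have "(\<Sum>i\<in>I. c i * g i y) \<noteq> 0" by simp
  then obtain i where "i \<in> I" "c i * g i y \<noteq> 0" by (meson sum.neutral)
  thus "y \<in> (\<Union>i\<in>I. {y. g i y \<noteq> 0})" by auto
qed

lemma Lf_lincomb:
  assumes "finite I" "finite T" "\<And>i. i \<in> I \<Longrightarrow> {x. g i x \<noteq> 0} \<subseteq> T"
  shows "Lf \<phi> (\<lambda>y. \<Sum>i\<in>I. c i * g i y) = (\<Sum>i\<in>I. of_int (c i) * Lf \<phi> (g i))"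
proof -
  have "Lf \<phi> (\<lambda>y. \<Sum>i\<in>I. c i * g i y) = (\<Sum>x\<in>T. of_int (\<Sum>i\<in>I. c i * g i x) * \<phi> x)"
    by (rule Lf_super) (use assms supp_lincomb[of c g I] in blast)+
  also have "\<dots> = (\<Sum>x\<in>T. \<Sum>i\<in>I. of_int (c i) * (of_int (g i x) * \<phi> x))"
    by (simp add: of_int_sum sum_distrib_right mult.assoc)
  also have "\<dots> = (\<Sum>i\<in>I. of_int (c i) * (\<Sum>x\<in>T. of_int (g i x) * \<phi> x))"
    by (subst sum.swap) (simp add: sum_distrib_left)
  also have "\<dots> = (\<Sum>i\<in>I. of_int (c i) * Lf \<phi> (g i))"
    using assms by (simp add: Lf_super)
  finally show ?thesis .
qed

lemma Lf_kill:
  assumes f: "f \<in> tensor_rel M R N"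
    and l: "\<And>m m' n. m \<in> M \<Longrightarrow> m' \<in> M \<Longrightarrow> n \<in> N \<Longrightarrow> \<phi> (m + m', n) = \<phi> (m, n) + \<phi> (m', n)"
    and r: "\<And>m n n'. m \<in> M \<Longrightarrow> n \<in> N \<Longrightarrow> n' \<in> N \<Longrightarrow> \<phi> (m, n + n') = \<phi> (m, n) + \<phi> (m, n')"
    and b: "\<And>m r n. m \<in> M \<Longrightarrow> r \<in> R \<Longrightarrow> n \<in> N \<Longrightarrow> \<phi> (m * r, n) = \<phi> (m, r * n)"
  shows "finite {x. f x \<noteq> 0} \<and> Lf \<phi> f = 0"
  using f
proof induction
  case zero then show ?case by (simp add: Lf_def)
next
  case (addl m m' n)
  have "finite {x. pt (m + m', n) x - pt (m, n) x - pt (m', n) x \<noteq> 0}"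
    by (rule finite_subset[OF supp_pt3]) simp
  then show ?case by (simp add: Lf_pt3 l addl)
next
  case (addr m n n')
  have "finite {x. pt (m, n + n') x - pt (m, n) x - pt (m, n') x \<noteq> 0}"
    by (rule finite_subset[OF supp_pt3]) simp
  then show ?case by (simp add: Lf_pt3 r addr)
next
  case (bal m r n)
  have "finite {x. pt (m * r, n) x - pt (m, r * n) x \<noteq> 0}"
    by (rule finite_subset[OF supp_pt2]) simp
  then show ?case by (simp add: Lf_pt2 b bal)
next
  case (add f g)
  have "{x. f x + g x \<noteq> 0} \<subseteq> {x. f x \<noteq> 0} \<union> {x. g x \<noteq> 0}" by auto
  then have "finite {x. f x + g x \<noteq> 0}" using add finite_subset by blast
  then show ?case using add by (simp add: Lf_add)
next
  case (neg f) then show ?case by (simp add: Lf_neg)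
qed



definition treq :: "'b::ring_1 set \<Rightarrow> 'b set \<Rightarrow> 'b set \<Rightarrow> ('b \<times> 'b \<Rightarrow> int) \<Rightarrow> ('b \<times> 'b \<Rightarrow> int) \<Rightarrow> bool" where
  "treq M R N f g \<longleftrightarrow> (\<lambda>x. f x - g x) \<in> tensor_rel M R N"

lemma tr_eq: "f \<in> tensor_rel M R N \<Longrightarrow> f = g \<Longrightarrow> g \<in> tensor_rel M R N" by simp

lemma treq_refl: "treq M R N f f"
  unfolding treq_def using tensor_rel.zero by simp

lemma treq_sym: "treq M R N f g \<Longrightarrow> treq M R N g f"
  unfolding treq_def by (drule tensor_rel.neg) simp

lemma treq_trans: "treq M R N f g \<Longrightarrow> treq M R N g h \<Longrightarrow> treq M R N f h"
  unfolding treq_def by (drule (1) tensor_rel.add) simp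

lemma treq_add: "treq M R N f f' \<Longrightarrow> treq M R N g g' \<Longrightarrow>
    treq M R N (\<lambda>x. f x + g x) (\<lambda>x. f' x + g' x)"
  unfolding treq_def by (drule (1) tensor_rel.add) (simp add: algebra_simps)

lemma treq_zero_iff: "treq M R N f (\<lambda>_. 0) \<longleftrightarrow> f \<in> tensor_rel M R N"
  unfolding treq_def by simp

lemma tr_scale_nat: "h \<in> tensor_rel M R N \<Longrightarrow> (\<lambda>x. int k * h x) \<in> tensor_rel M R N"
proof (induction k)
  case 0 then show ?case using tensor_rel.zero by simp
next
  case (Suc k)
  from tensor_rel.add[OF Suc.IH[OF Suc.prems] Suc.prems]
  show ?case by (simp add: algebra_simps)
qed

lemma tr_scale: assumes h: "h \<in> tensor_rel M R N" shows "(\<lambda>x. c * h x) \<in> tensor_rel M R N"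
proof (cases c rule: int_cases2)
  case (nonneg n) then show ?thesis using tr_scale_nat[OF h] by blast
next
  case (nonpos n)
  from tensor_rel.neg[OF tr_scale_nat[OF h, of n]] nonpos show ?thesis by simp
qed

lemma treq_scale: "treq M R N f g \<Longrightarrow> treq M R N (\<lambda>x. c * f x) (\<lambda>x. c * g x)"
  unfolding treq_def by (drule tr_scale[where c=c]) (simp add: algebra_simps)

lemma treq_sum: "finite I \<Longrightarrow> (\<And>i. i \<in> I \<Longrightarrow> treq M R N (f i) (g i)) \<Longrightarrow>
   treq M R N (\<lambda>x. \<Sum>i\<in>I. f i x) (\<lambda>x. \<Sum>i\<in>I. g i x)"
proof (induction I rule: finite_induct)
  case empty then show ?case by (simp add: treq_refl)
next
  case (insert i I)
  have "treq M R N (\<lambda>x. f i x + (\<lambda>x. \<Sum>i\<in>I. f i x) x) (\<lambda>x. g i x + (\<lambda>x. \<Sum>i\<in>I. g i x) x)"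
    by (rule treq_add) (use insert in auto)
  with insert show ?case by simp
qed

definition addgrp :: "'b::ring_1 set \<Rightarrow> bool" where
  "addgrp X \<longleftrightarrow> 0 \<in> X \<and> (\<forall>x\<in>X. \<forall>y\<in>X. x + y \<in> X) \<and> (\<forall>x\<in>X. - x \<in> X)"

lemma sum_in: "0 \<in> X \<Longrightarrow> (\<forall>x\<in>X. \<forall>y\<in>X. x + y \<in> X) \<Longrightarrow> (\<And>i. i \<in> I \<Longrightarrow> g i \<in> X) \<Longrightarrow> sum g I \<in> X"
  by (induction I rule: infinite_finite_induct) auto

lemma ofint_in: "addgrp X \<Longrightarrow> a \<in> X \<Longrightarrow> of_int c * a \<in> X"
proof -
  assume X: "addgrp X" and a: "a \<in> X"
  have n: "of_nat k * a \<in> X" for k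
    by (induction k) (use X a in \<open>auto simp: addgrp_def algebra_simps\<close>)
  show ?thesis
  proof (cases c rule: int_cases2)
    case (nonneg n) then show ?thesis using n[of n] by simp
  next
    case (nonpos n) then show ?thesis using n[of n] X by (simp add: addgrp_def)
  qed
qed

lemma pt2_zero: "m \<in> M \<Longrightarrow> 0 \<in> N \<Longrightarrow> pt (m, 0) \<in> tensor_rel M R N"
proof -
  assume m: "m \<in> M" and z: "0 \<in> N"
  from tensor_rel.neg[OF tensor_rel.addr[OF m z z]] show ?thesis by simp
qed

lemma pt2_add: "m \<in> M \<Longrightarrow> a \<in> N \<Longrightarrow> b \<in> N \<Longrightarrow>
   treq M R N (pt (m, a + b)) (\<lambda>x. pt (m, a) x + pt (m, b) x)"
  unfolding treq_def using tensor_rel.addr[of m M a N b R] by (simp add: algebra_simps)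

lemma pt2_sum: assumes "m \<in> M" "addgrp N" "finite I" "\<And>i. i \<in> I \<Longrightarrow> g i \<in> N" shows
   "treq M R N (pt (m, \<Sum>i\<in>I. g i)) (\<lambda>x. \<Sum>i\<in>I. pt (m, g i) x)"
  using assms(3,4,1,2)
proof (induction I rule: finite_induct)
  case empty then show ?case using pt2_zero[of m M N R] by (simp add: treq_def addgrp_def)
next
  case (insert i I)
  have s: "sum g I \<in> N" using insert sum_in[of N I g] by (auto simp: addgrp_def)
  have "treq M R N (pt (m, g i + sum g I)) (\<lambda>x. pt (m, g i) x + pt (m, sum g I) x)"
    using pt2_add[of m M "g i" N "sum g I" R] insert s by auto
  moreover have "treq M R N (\<lambda>x. pt (m, g i) x + pt (m, sum g I) x)
     (\<lambda>x. pt (m, g i) x + (\<lambda>x. \<Sum>i\<in>I. pt (m, g i) x) x)"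
    by (rule treq_add) (use insert treq_refl in auto)
  ultimately show ?case using insert by (simp add: treq_trans)
qed

lemma pt2_neg: "m \<in> M \<Longrightarrow> addgrp N \<Longrightarrow> a \<in> N \<Longrightarrow>
   treq M R N (pt (m, - a)) (\<lambda>x. - pt (m, a) x)"
proof -
  assume m: "m \<in> M" and N: "addgrp N" and a: "a \<in> N"
  have na: "- a \<in> N" "0 \<in> N" using N a by (auto simp: addgrp_def)
  have X: "(\<lambda>x. pt (m, a + - a) x - pt (m, a) x - pt (m, - a) x) \<in> tensor_rel M R N"
    using tensor_rel.addr[OF m a na(1)] .
  have Z: "pt (m, 0) \<in> tensor_rel M R N" using pt2_zero[OF m na(2)] .
  from tensor_rel.add[OF Z tensor_rel.neg[OF X]] show ?thesis
    unfolding treq_def by (simp add: algebra_simps)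
qed

lemma pt2_intmul: "m \<in> M \<Longrightarrow> addgrp N \<Longrightarrow> a \<in> N \<Longrightarrow>
   treq M R N (pt (m, of_int c * a)) (\<lambda>x. c * pt (m, a) x)"
proof -
  assume m: "m \<in> M" and N: "addgrp N" and a: "a \<in> N"
  have n: "treq M R N (pt (m, of_nat k * a)) (\<lambda>x. int k * pt (m, a) x)" for k
  proof (induction k)
    case 0 then show ?case using pt2_zero[OF m, of N R] N by (simp add: treq_def addgrp_def)
  next
    case (Suc k)
    have ka: "of_nat k * a \<in> N" using ofint_in[OF N a, of "int k"] by simp
    have "treq M R N (pt (m, of_nat k * a + a)) (\<lambda>x. pt (m, of_nat k * a) x + pt (m, a) x)"
      using pt2_add[OF m ka a] .
    moreover have "treq M R N (\<lambda>x. pt (m, of_nat k * a) x + pt (m, a) x)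
        (\<lambda>x. (\<lambda>x. int k * pt (m, a) x) x + pt (m, a) x)"
      by (rule treq_add) (use Suc treq_refl in auto)
    ultimately show ?case by (auto simp: algebra_simps dest: treq_trans)
  qed
  show ?thesis
  proof (cases c rule: int_cases2)
    case (nonneg k) then show ?thesis using n[of k] by simp
  next
    case (nonpos k)
    have ka: "of_nat k * a \<in> N" using ofint_in[OF N a, of "int k"] by simp
    have "treq M R N (pt (m, - (of_nat k * a))) (\<lambda>x. - pt (m, of_nat k * a) x)"
      using pt2_neg[OF m N ka] .
    moreover have "treq M R N (\<lambda>x. - pt (m, of_nat k * a) x) (\<lambda>x. - (int k * pt (m, a) x))"
      using treq_scale[OF n[of k], of "-1"] by simp
    ultimately show ?thesis using nonpos by (auto dest: treq_trans)
  qed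
qed

lemma pt2_lincomb: "m \<in> M \<Longrightarrow> addgrp N \<Longrightarrow> finite I \<Longrightarrow> (\<And>i. i \<in> I \<Longrightarrow> g i \<in> N) \<Longrightarrow>
   treq M R N (pt (m, \<Sum>i\<in>I. of_int (c i) * g i)) (\<lambda>x. \<Sum>i\<in>I. c i * pt (m, g i) x)"
proof -
  assume m: "m \<in> M" and N: "addgrp N" and I: "finite I" and g: "\<And>i. i \<in> I \<Longrightarrow> g i \<in> N"
  have "treq M R N (pt (m, \<Sum>i\<in>I. of_int (c i) * g i)) (\<lambda>x. \<Sum>i\<in>I. pt (m, of_int (c i) * g i) x)"
    by (rule pt2_sum[OF m N I]) (use ofint_in[OF N] g in auto)
  moreover have "treq M R N (\<lambda>x. \<Sum>i\<in>I. pt (m, of_int (c i) * g i) x) (\<lambda>x. \<Sum>i\<in>I. c i * pt (m, g i) x)"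
    by (rule treq_sum[OF I]) (use pt2_intmul[OF m N] g in auto)
  ultimately show ?thesis by (rule treq_trans)
qed

lemma pt1_sum: assumes "n \<in> N" "0 \<in> M" "\<forall>x\<in>M. \<forall>y\<in>M. x + y \<in> M" "finite I" "\<And>i. i \<in> I \<Longrightarrow> g i \<in> M"
  shows "treq M R N (pt (\<Sum>i\<in>I. g i, n)) (\<lambda>x. \<Sum>i\<in>I. pt (g i, n) x)"
  using assms(4,5,1,2,3)
proof (induction I rule: finite_induct)
  case empty
  from tensor_rel.neg[OF tensor_rel.addl[OF empty(3) empty(3) empty(2)]]
  show ?case by (simp add: treq_def)
next
  case (insert i I)
  have s: "sum g I \<in> M" using insert sum_in[of M I g] by auto
  have "treq M R N (pt (g i + sum g I, n)) (\<lambda>x. pt (g i, n) x + pt (sum g I, n) x)"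
    using tensor_rel.addl[of "g i" M "sum g I" n N R] insert s
    by (simp add: treq_def algebra_simps)
  moreover have "treq M R N (\<lambda>x. pt (g i, n) x + pt (sum g I, n) x)
     (\<lambda>x. pt (g i, n) x + (\<lambda>x. \<Sum>i\<in>I. pt (g i, n) x) x)"
    by (rule treq_add) (use insert treq_refl in auto)
  ultimately show ?case using insert by (simp add: treq_trans)
qed

lemma pt_bal: "m \<in> M \<Longrightarrow> r \<in> R \<Longrightarrow> n \<in> N \<Longrightarrow> treq M R N (pt (m * r, n)) (pt (m, r * n))"
  unfolding treq_def by (rule tensor_rel.bal)

lemma ofc: "of_int c * (a * y) = a * (of_int c * (y::'b::ring_1))"
  by (metis mult.assoc mult_of_int_commute)

lemma com_term:
  assumes "e * (a * s) = a * (e * (s::'b::ring_1))"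
  shows "of_int c * (e * (a * s) - e * (s * a)) = a * (of_int c * (e * s)) - of_int c * (e * s) * a"
proof -
  have "of_int c * (e * (a * s)) = a * (of_int c * (e * s))" using assms ofc by metis
  moreover have "of_int c * (e * (s * a)) = of_int c * (e * s) * a" by (simp add: mult.assoc)
  ultimately show ?thesis by (simp add: right_diff_distrib)
qed



lemma neg_in:
  assumes alg: "complex_star_algebra sc st" and S: "unital_star_subalgebra sc st S" and x: "x \<in> S"
  shows "- x \<in> S"
proof -
  have sc0: "sc 0 y = 0" for y
  proof -
    have "sc (0 + 0) y = sc 0 y + sc 0 y" using alg unfolding complex_star_algebra_def by blast
    then have "sc 0 y + sc 0 y = sc 0 y + 0" by simp
    thus ?thesis by (rule add_left_imp_eq)
  qed
  have "sc (-1) x + sc 1 x = sc (-1 + 1) x" using alg unfolding complex_star_algebra_def by metis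
  moreover have "sc 1 x = x" using alg unfolding complex_star_algebra_def by blast
  ultimately have "sc (-1) x + x = sc (-1 + 1) x" by simp
  also have "\<dots> = 0" using sc0 by simp
  finally have "sc (-1) x = - x" by (simp add: eq_neg_iff_add_eq_0)
  with S x show ?thesis unfolding unital_star_subalgebra_def by metis
qed

theorem proposition4p16:
  fixes sc :: "complex \<Rightarrow> 'b::ring_1 \<Rightarrow> 'b"
    and st :: "'b \<Rightarrow> 'b"
    and A A' E' :: "'b set"
    and d :: "'b \<Rightarrow> 'b"
  assumes alg: "complex_star_algebra sc st"
    and A: "unital_star_subalgebra sc st A"
    and d_leibniz: "\<forall>a\<in>A. \<forall>b\<in>A. d (a * b) = a * d b + d a * b"
    and d_star: "\<forall>a\<in>A. d (st a) = - st (d a)"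
    and A': "unital_star_subalgebra sc st A'" "A' \<subseteq> centre_in A A"
    and E'_sub: "E' \<subseteq> centre_in A (cspan sc {a * d b | a b. a \<in> A \<and> b \<in> A})"
    and E'_mod: "submodule_over A' E'"
    and E'_proj: "fg_projective A' E'"
    and iso: "tensor_mult_iso E' A' A (cspan sc {a * d b | a b. a \<in> A \<and> b \<in> A})"
  shows "tensor_mult_iso E' A' (centre_in A A)
           (centre_in A (cspan sc {a * d b | a b. a \<in> A \<and> b \<in> A}))"
proof -
  define E where "E = cspan sc {a * d b | a b. a \<in> A \<and> b \<in> A}"
  define ZA where "ZA = centre_in A A"
  have A0: "0 \<in> A" "1 \<in> A" and Aadd: "\<And>x y. x \<in> A \<Longrightarrow> y \<in> A \<Longrightarrow> x + y \<in> A"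
    and Amul: "\<And>x y. x \<in> A \<Longrightarrow> y \<in> A \<Longrightarrow> x * y \<in> A"
    using A by (auto simp: unital_star_subalgebra_def)
  have Aneg: "\<And>x. x \<in> A \<Longrightarrow> - x \<in> A" using neg_in[OF alg A] .
  have A'0: "0 \<in> A'" "1 \<in> A'" and A'add: "\<And>x y. x \<in> A' \<Longrightarrow> y \<in> A' \<Longrightarrow> x + y \<in> A'"
    using A'(1) by (auto simp: unital_star_subalgebra_def)
  have ZA_A: "ZA \<subseteq> A" by (auto simp: ZA_def centre_in_def)
  have ZAc: "\<And>z a. z \<in> ZA \<Longrightarrow> a \<in> A \<Longrightarrow> z * a = a * z" by (auto simp: ZA_def centre_in_def)
  have A'ZA: "A' \<subseteq> ZA" using A'(2) by (simp add: ZA_def)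
  have ZAmul: "\<And>x y. x \<in> ZA \<Longrightarrow> y \<in> ZA \<Longrightarrow> x * y \<in> ZA"
  proof -
    fix x y assume x: "x \<in> ZA" and y: "y \<in> ZA"
    have xy: "x * y \<in> A" using x y ZA_A Amul by blast
    have "x * y * a = a * (x * y)" if a: "a \<in> A" for a
    proof -
      have "x * y * a = x * (a * y)" using ZAc[OF y a] by (simp add: mult.assoc)
      also have "\<dots> = (x * a) * y" by (simp add: mult.assoc)
      also have "\<dots> = a * (x * y)" using ZAc[OF x a] by (simp add: mult.assoc)
      finally show ?thesis .
    qed
    then show "x * y \<in> ZA" using xy by (simp add: ZA_def centre_in_def)
  qed
  have grpZA: "addgrp ZA"
    unfolding addgrp_def ZA_def centre_in_def using A0 Aadd Aneg
    by (auto simp: algebra_simps)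
  have grpA: "addgrp A" unfolding addgrp_def using A0 Aadd Aneg by auto
  have E'0: "0 \<in> E'" and E'add: "\<forall>x\<in>E'. \<forall>y\<in>E'. x + y \<in> E'"
    and E'mul: "\<And>x r. x \<in> E' \<Longrightarrow> r \<in> A' \<Longrightarrow> x * r \<in> E'"
    using E'_mod by (auto simp: submodule_over_def)
  have E'E: "\<And>e. e \<in> E' \<Longrightarrow> e \<in> E" and E'c: "\<And>e a. e \<in> E' \<Longrightarrow> a \<in> A \<Longrightarrow> e * a = a * e"
    using E'_sub by (auto simp: E_def centre_in_def)
  have iso1: "\<And>f. f \<in> free_ab E' A \<Longrightarrow> tensor_eval f \<in> E"
   and iso2: "\<And>t. t \<in> E \<Longrightarrow> \<exists>f\<in>free_ab E' A. tensor_eval f = t"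
   and iso3: "\<And>f. f \<in> free_ab E' A \<Longrightarrow> tensor_eval f = 0 \<Longrightarrow> f \<in> tensor_rel E' A' A"
    using iso by (auto simp: tensor_mult_iso_def E_def)
  have fabZ: "\<And>f. f \<in> free_ab E' ZA \<Longrightarrow> f \<in> free_ab E' A"
    using ZA_A by (auto simp: free_ab_def)
  obtain n i p where
    H: "(\<forall>m\<in>E'. i m \<in> free_rank A' n) \<and>
        (\<forall>m\<in>E'. \<forall>m'\<in>E'. i (m + m') = (\<lambda>k. i m k + i m' k)) \<and>
        (\<forall>m\<in>E'. \<forall>r\<in>A'. i (m * r) = (\<lambda>k. i m k * r)) \<and>
        (\<forall>v\<in>free_rank A' n. p v \<in> E') \<and>
        (\<forall>v\<in>free_rank A' n. \<forall>w\<in>free_rank A' n. p (\<lambda>k. v k + w k) = p v + p w) \<and>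
        (\<forall>v\<in>free_rank A' n. \<forall>r\<in>A'. p (\<lambda>k. v k * r) = p v * r) \<and>
        (\<forall>m\<in>E'. p (i m) = m)"
    using E'_proj unfolding fg_projective_def by (elim exE) (rule that)
  have i1: "\<And>m. m \<in> E' \<Longrightarrow> i m \<in> free_rank A' n" using H by blast
  have i2: "\<And>m m'. m \<in> E' \<Longrightarrow> m' \<in> E' \<Longrightarrow> i (m + m') = (\<lambda>k. i m k + i m' k)" using H by blast
  have i3: "\<And>m r. m \<in> E' \<Longrightarrow> r \<in> A' \<Longrightarrow> i (m * r) = (\<lambda>k. i m k * r)" using H by blast
  have p1: "\<And>v. v \<in> free_rank A' n \<Longrightarrow> p v \<in> E'" using H by blast
  have p2: "\<And>v w. v \<in> free_rank A' n \<Longrightarrow> w \<in> free_rank A' n \<Longrightarrow> p (\<lambda>k. v k + w k) = p v + p w" using H by blast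
  have p3: "\<And>v r. v \<in> free_rank A' n \<Longrightarrow> r \<in> A' \<Longrightarrow> p (\<lambda>k. v k * r) = p v * r" using H by blast
  have pi: "\<And>m. m \<in> E' \<Longrightarrow> p (i m) = m" using H by blast
  define FR where "FR = free_rank A' n"
  have imA': "\<And>m k. m \<in> E' \<Longrightarrow> i m k \<in> A'"
  proof -
    fix m k assume m: "m \<in> E'"
    show "i m k \<in> A'"
    proof (cases "k < n")
      case True then show ?thesis using i1[OF m] by (simp add: free_rank_def)
    next
      case False then show ?thesis using i1[OF m] A'0 by (simp add: free_rank_def)
    qed
  qed
  have imA: "\<And>m k. m \<in> E' \<Longrightarrow> i m k \<in> A" and imZ: "\<And>m k. m \<in> E' \<Longrightarrow> i m k \<in> ZA"
    using imA' A'ZA ZA_A by blast+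
  define \<delta> where "\<delta> k = (\<lambda>j::nat. if j = k then (1::'b) else 0)" for k :: nat
  define P where "P k = p (\<delta> k)" for k
  have FR0: "(\<lambda>j. 0) \<in> FR" using A'0 by (simp add: FR_def free_rank_def)
  have FRadd: "\<And>v w. v \<in> FR \<Longrightarrow> w \<in> FR \<Longrightarrow> (\<lambda>j. v j + w j) \<in> FR"
    using A'add by (simp add: FR_def free_rank_def)
  have p0: "p (\<lambda>j. 0) = 0" using p2[OF FR0[unfolded FR_def] FR0[unfolded FR_def]] by simp
  have psum: "\<And>K w. finite K \<Longrightarrow> (\<forall>k\<in>K. w k \<in> FR) \<Longrightarrow>
      (\<lambda>j. \<Sum>k\<in>K. w k j) \<in> FR \<and> p (\<lambda>j. \<Sum>k\<in>K. w k j) = (\<Sum>k\<in>K. p (w k))"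
  proof -
    fix K w assume "finite K" "\<forall>k\<in>K. w k \<in> FR"
    then show "(\<lambda>j. \<Sum>k\<in>K. w k j) \<in> FR \<and> p (\<lambda>j. \<Sum>k\<in>K. w k j) = (\<Sum>k\<in>K. p (w k))"
    proof (induction K rule: finite_induct)
      case empty then show ?case using FR0 p0 by simp
    next
      case (insert k K)
      then have a: "w k \<in> FR" "(\<lambda>j. \<Sum>k\<in>K. w k j) \<in> FR" by auto
      show ?case using insert FRadd[OF a] p2[OF a[unfolded FR_def]] by simp
    qed
  qed
  have \<delta>FR: "\<And>k r. k < n \<Longrightarrow> r \<in> A' \<Longrightarrow> (\<lambda>j. \<delta> k j * r) \<in> FR"
    using A'0 by (auto simp: FR_def free_rank_def \<delta>_def)
  have PE': "\<And>k. k < n \<Longrightarrow> P k \<in> E'"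
    unfolding P_def using p1 \<delta>FR[of _ 1] A'0 by (simp add: FR_def)
  have decomp: "\<And>m. m \<in> E' \<Longrightarrow> (\<Sum>k<n. P k * i m k) = m"
  proof -
    fix m assume m: "m \<in> E'"
    have "(\<Sum>k<n. P k * i m k) = (\<Sum>k<n. p (\<lambda>j. \<delta> k j * i m k))"
      unfolding P_def using p3 \<delta>FR[of _ 1] A'0 imA'[OF m] by (simp add: FR_def)
    also have "\<dots> = p (\<lambda>j. \<Sum>k<n. \<delta> k j * i m k)"
      using psum[of "{..<n}" "\<lambda>k j. \<delta> k j * i m k"] \<delta>FR imA'[OF m] by simp
    also have "(\<lambda>j. \<Sum>k<n. \<delta> k j * i m k) = i m"
    proof
      fix j show "(\<Sum>k<n. \<delta> k j * i m k) = i m j"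
      proof (cases "j < n")
        case True
        have "(\<Sum>k<n. \<delta> k j * i m k) = (\<Sum>k\<in>{..<n}. if k = j then i m k else 0)"
          by (intro sum.cong) (auto simp: \<delta>_def)
        also have "\<dots> = i m j" using True by simp
        finally show ?thesis .
      next
        case False
        then have "i m j = 0" using i1[OF m] by (simp add: free_rank_def)
        with False show ?thesis by (simp add: \<delta>_def)
      qed
    qed
    finally show "(\<Sum>k<n. P k * i m k) = m" using pi[OF m] by simp
  qed
  define \<phi> where "\<phi> k = (\<lambda>x::'b\<times>'b. i (fst x) k * snd x)" for k
  have kill: "\<And>f k. f \<in> tensor_rel E' A' A \<Longrightarrow> Lf (\<phi> k) f = 0"
  proof -
    fix f k assume "f \<in> tensor_rel E' A' A"
    from Lf_kill[OF this, of "\<phi> k"] show "Lf (\<phi> k) f = 0"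
      unfolding \<phi>_def by (simp add: i2 i3 distrib_left distrib_right mult.assoc)
  qed
  show ?thesis
    unfolding tensor_mult_iso_def E_def[symmetric] ZA_def[symmetric]
  proof (intro conjI ballI impI)
    fix f assume f: "f \<in> free_ab E' ZA"
    let ?S = "{x. f x \<noteq> 0}"
    have S: "?S \<subseteq> E' \<times> ZA" using f by (auto simp: free_ab_def)
    have "tensor_eval f \<in> E" using iso1 fabZ f by blast
    moreover have "tensor_eval f * a = a * tensor_eval f" if a: "a \<in> A" for a
    proof -
      have t: "of_int (f x) * (fst x * snd x) * a = a * (of_int (f x) * (fst x * snd x))" if "x \<in> ?S" for x
      proof -
        have e: "fst x \<in> E'" and z: "snd x \<in> ZA" using S that by auto
        have h: "fst x * (snd x * a) = a * (fst x * snd x)"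
        proof -
          have "fst x * (snd x * a) = (fst x * a) * snd x" using ZAc[OF z a] by (simp add: mult.assoc)
          also have "\<dots> = a * (fst x * snd x)" using E'c[OF e a] by (simp add: mult.assoc)
          finally show ?thesis .
        qed
        have "of_int (f x) * (fst x * snd x) * a = of_int (f x) * (fst x * (snd x * a))"
          by (simp add: mult.assoc)
        also have "\<dots> = of_int (f x) * (a * (fst x * snd x))" by (simp only: h)
        also have "\<dots> = a * (of_int (f x) * (fst x * snd x))" by (rule ofc)
        finally show ?thesis .
      qed
      show ?thesis unfolding tensor_eval_def sum_distrib_left sum_distrib_right
        using t by (intro sum.cong) auto
    qed
    ultimately show "tensor_eval f \<in> centre_in A E" by (simp add: centre_in_def)
  next
    fix t assume tZ: "t \<in> centre_in A E"
    then have tE: "t \<in> E" and tc: "\<And>a. a \<in> A \<Longrightarrow> t * a = a * t" by (auto simp: centre_in_def)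
    obtain f where f: "f \<in> free_ab E' A" and ft: "tensor_eval f = t" using iso2[OF tE] by blast
    let ?S = "{x. f x \<noteq> 0}"
    have S: "?S \<subseteq> E' \<times> A" "finite ?S" using f by (auto simp: free_ab_def)
    define v where "v k = Lf (\<phi> k) f" for k
    have vdef: "v k = (\<Sum>x\<in>?S. of_int (f x) * (i (fst x) k * snd x))" for k
      by (simp add: v_def Lf_def \<phi>_def)
    have vA: "v k \<in> A" for k
      unfolding vdef
      by (rule sum_in[of A]) (use A0 Aadd S imA Amul ofint_in[OF grpA] in \<open>auto\<close>)
    have vc: "v k * a = a * v k" if a: "a \<in> A" for k a
    proof -
      define h where "h = (\<lambda>y. \<Sum>x\<in>?S. f x * (\<lambda>y. pt (fst x, a * snd x) y - pt (fst x, snd x * a) y) y)"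
      let ?T = "(\<lambda>x. (fst x, a * snd x)) ` ?S \<union> (\<lambda>x. (fst x, snd x * a)) ` ?S"
      have Tf: "finite ?T" using S by simp
      have sub: "{y. pt (fst x, a * snd x) y - pt (fst x, snd x * a) y \<noteq> 0} \<subseteq> ?T" if "x \<in> ?S" for x
        using supp_pt2 that by blast
      have Lh: "Lf \<psi> h = (\<Sum>x\<in>?S. of_int (f x) * (\<psi> (fst x, a * snd x) - \<psi> (fst x, snd x * a)))" for \<psi>
        unfolding h_def by (subst Lf_lincomb[OF S(2) Tf sub]) (auto simp: Lf_pt2)
      have hf: "h \<in> free_ab E' A"
      proof -
        have "{y. h y \<noteq> 0} \<subseteq> (\<Union>x\<in>?S. {y. pt (fst x, a * snd x) y - pt (fst x, snd x * a) y \<noteq> 0})"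
          unfolding h_def using supp_lincomb[of f "\<lambda>x y. pt (fst x, a * snd x) y - pt (fst x, snd x * a) y" ?S]
          by simp
        then have "{y. h y \<noteq> 0} \<subseteq> ?T" using sub by blast
        moreover have "?T \<subseteq> E' \<times> A" using S a Amul by auto
        ultimately show ?thesis unfolding free_ab_def using Tf finite_subset by blast
      qed
      have "tensor_eval h = a * t - t * a"
      proof -
        have "tensor_eval h = (\<Sum>x\<in>?S. of_int (f x) * (fst x * (a * snd x) - fst x * (snd x * a)))"
          by (simp add: eval_Lf Lh)
        also have "\<dots> = (\<Sum>x\<in>?S. a * (of_int (f x) * (fst x * snd x)) - of_int (f x) * (fst x * snd x) * a)"
        proof (rule sum.cong[OF refl])
          fix x assume "x \<in> ?S"
          then have e: "fst x \<in> E'" using S by auto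
          have "fst x * (a * snd x) = a * (fst x * snd x)"
            using E'c[OF e a] by (simp add: mult.assoc[symmetric])
          then show "of_int (f x) * (fst x * (a * snd x) - fst x * (snd x * a)) =
              a * (of_int (f x) * (fst x * snd x)) - of_int (f x) * (fst x * snd x) * a"
            by (rule com_term)
        qed
        also have "\<dots> = a * t - t * a"
          using ft by (simp add: tensor_eval_def sum_subtractf flip: sum_distrib_left sum_distrib_right)
        finally show ?thesis .
      qed
      then have "tensor_eval h = 0" using tc[OF a] by simp
      then have "Lf (\<phi> k) h = 0" using kill iso3 hf by blast
      also have "Lf (\<phi> k) h = a * v k - v k * a"
      proof -
        have "Lf (\<phi> k) h = (\<Sum>x\<in>?S. a * (of_int (f x) * (i (fst x) k * snd x)) - of_int (f x) * (i (fst x) k * snd x) * a)"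
          unfolding Lh
        proof (rule sum.cong[OF refl])
          fix x assume "x \<in> ?S"
          then have e: "fst x \<in> E'" using S by auto
          have c: "i (fst x) k * a = a * i (fst x) k" using ZAc[OF imZ[OF e] a] .
          show "of_int (f x) * (\<phi> k (fst x, a * snd x) - \<phi> k (fst x, snd x * a)) =
              a * (of_int (f x) * (i (fst x) k * snd x)) - of_int (f x) * (i (fst x) k * snd x) * a"
            unfolding \<phi>_def fst_conv snd_conv
            by (rule com_term) (simp add: c mult.assoc[symmetric])
        qed
        also have "\<dots> = a * v k - v k * a"
          by (simp add: vdef sum_subtractf sum_distrib_left sum_distrib_right)
        finally show ?thesis .
      qed
      finally show ?thesis by simp
    qed
    have vZ: "v k \<in> ZA" for k using vA vc by (auto simp: ZA_def centre_in_def)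
    define g where "g = (\<lambda>y. \<Sum>k\<in>{..<n}. 1 * pt (P k, v k) y)"
    let ?U = "(\<lambda>k. (P k, v k)) ` {..<n}"
    have subU: "{y. pt (P k, v k) y \<noteq> 0} \<subseteq> ?U" if "k \<in> {..<n}" for k
      using that by (auto simp: supp_pt)
    have gf: "g \<in> free_ab E' ZA"
    proof -
      have "{y. g y \<noteq> 0} \<subseteq> (\<Union>k\<in>{..<n}. {y. pt (P k, v k) y \<noteq> 0})"
        unfolding g_def using supp_lincomb[of "\<lambda>_. 1" "\<lambda>k. pt (P k, v k)" "{..<n}"] by simp
      then have "{y. g y \<noteq> 0} \<subseteq> ?U" using subU by blast
      moreover have "?U \<subseteq> E' \<times> ZA" using PE' vZ by auto
      ultimately show ?thesis unfolding free_ab_def using finite_subset by blast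
    qed
    have "tensor_eval g = (\<Sum>k<n. P k * v k)"
      unfolding eval_Lf g_def by (subst Lf_lincomb[OF _ _ subU]) (auto simp: Lf_pt)
    also have "\<dots> = (\<Sum>k<n. \<Sum>x\<in>?S. of_int (f x) * ((P k * i (fst x) k) * snd x))"
      unfolding vdef sum_distrib_left
      by (intro sum.cong refl) (simp add: ofc mult.assoc)
    also have "\<dots> = (\<Sum>x\<in>?S. of_int (f x) * ((\<Sum>k<n. P k * i (fst x) k) * snd x))"
      by (subst sum.swap) (simp add: sum_distrib_left sum_distrib_right)
    also have "\<dots> = (\<Sum>x\<in>?S. of_int (f x) * (fst x * snd x))"
      using S decomp by (intro sum.cong refl) auto
    also have "\<dots> = t" using ft by (simp add: tensor_eval_def)
    finally show "\<exists>f\<in>free_ab E' ZA. tensor_eval f = t" using gf by blast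
  next
    fix f assume f: "f \<in> free_ab E' ZA" and f0: "tensor_eval f = 0"
    let ?S = "{x. f x \<noteq> 0}"
    let ?TR = "tensor_rel E' A' ZA"
    have S: "?S \<subseteq> E' \<times> ZA" "finite ?S" using f by (auto simp: free_ab_def)
    have frel: "f \<in> tensor_rel E' A' A" using iso3 fabZ f f0 by blast
    have V0: "(\<Sum>x\<in>?S. of_int (f x) * (i (fst x) k * snd x)) = 0" for k
      using kill[OF frel, of k] by (simp add: Lf_def \<phi>_def)
    define r where "r x k = i (fst x) k * snd x" for x k
    have rZ: "x \<in> ?S \<Longrightarrow> r x k \<in> ZA" for x k
      using S imZ ZAmul by (auto simp: r_def)
    have fsum: "f = (\<lambda>y. \<Sum>x\<in>?S. f x * pt x y)"
    proof
      fix y show "f y = (\<Sum>x\<in>?S. f x * pt x y)"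
      proof -
        have "(\<Sum>x\<in>?S. f x * pt x y) = (\<Sum>x\<in>?S. if y = x then f x else 0)"
          by (intro sum.cong) (auto simp: pt_def)
        also have "\<dots> = f y" using sum.delta'[OF S(2), of y f] by simp
        finally show ?thesis by simp
      qed
    qed
    have step: "treq E' A' ZA (pt x) (\<lambda>y. \<Sum>k<n. pt (P k, r x k) y)" if x: "x \<in> ?S" for x
    proof -
      have e: "fst x \<in> E'" and z: "snd x \<in> ZA" using S x by auto
      have "pt x = pt (\<Sum>k<n. P k * i (fst x) k, snd x)" using decomp[OF e] by simp
      moreover have "treq E' A' ZA (pt (\<Sum>k<n. P k * i (fst x) k, snd x)) (\<lambda>y. \<Sum>k<n. pt (P k * i (fst x) k, snd x) y)"
        by (rule pt1_sum[OF z E'0 E'add]) (auto intro: E'mul PE' imA'[OF e])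
      moreover have "treq E' A' ZA (\<lambda>y. \<Sum>k<n. pt (P k * i (fst x) k, snd x) y) (\<lambda>y. \<Sum>k<n. pt (P k, r x k) y)"
        unfolding r_def by (rule treq_sum) (auto intro: pt_bal PE' imA'[OF e] z)
      ultimately show ?thesis by (auto dest: treq_trans)
    qed
    have "treq E' A' ZA (\<lambda>y. \<Sum>x\<in>?S. f x * pt x y) (\<lambda>y. \<Sum>x\<in>?S. f x * (\<Sum>k<n. pt (P k, r x k) y))"
      by (rule treq_sum[OF S(2)]) (rule treq_scale, rule step, simp)
    also have "(\<lambda>y. \<Sum>x\<in>?S. f x * (\<Sum>k<n. pt (P k, r x k) y)) = (\<lambda>y. \<Sum>k<n. \<Sum>x\<in>?S. f x * pt (P k, r x k) y)"
      by (subst sum.swap) (simp add: sum_distrib_left)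
    finally have c1: "treq E' A' ZA f (\<lambda>y. \<Sum>k<n. \<Sum>x\<in>?S. f x * pt (P k, r x k) y)"
      using fsum by simp
    have c2: "treq E' A' ZA (\<lambda>y. \<Sum>k<n. \<Sum>x\<in>?S. f x * pt (P k, r x k) y) (\<lambda>y. \<Sum>k<n. pt (P k, 0) y)"
    proof (rule treq_sum, simp)
      fix k assume k: "k \<in> {..<n}"
      have "treq E' A' ZA (pt (P k, \<Sum>x\<in>?S. of_int (f x) * r x k)) (\<lambda>y. \<Sum>x\<in>?S. f x * pt (P k, r x k) y)"
        by (rule pt2_lincomb[OF _ grpZA S(2)]) (use PE' k rZ in auto)
      moreover have "(\<Sum>x\<in>?S. of_int (f x) * r x k) = 0" using V0 by (simp add: r_def)
      ultimately show "treq E' A' ZA (\<lambda>y. \<Sum>x\<in>?S. f x * pt (P k, r x k) y) (pt (P k, 0))"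
        by (simp add: treq_sym)
    qed
    have c3: "treq E' A' ZA (\<lambda>y. \<Sum>k<n. pt (P k, 0) y) (\<lambda>y. \<Sum>k<n. (\<lambda>_. 0) y)"
    proof (rule treq_sum, simp)
      fix k assume "k \<in> {..<n}"
      then have "pt (P k, 0) \<in> tensor_rel E' A' ZA"
        using pt2_zero[of "P k" E' ZA A'] PE' grpZA by (auto simp: addgrp_def)
      then show "treq E' A' ZA (pt (P k, 0)) (\<lambda>_. 0)" by (simp add: treq_zero_iff)
    qed
    have "treq E' A' ZA f (\<lambda>_. 0)" using treq_trans[OF treq_trans[OF c1 c2] c3] by simp
    then show "f \<in> tensor_rel E' A' ZA" by (simp add: treq_zero_iff)
  qed
qed

end
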